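(* Let $H$ be a separable complex Hilbert space with inner product $\langle \cdot,\cdot\rangle$ and norm $\|\cdot\|$. Let $u,v\in H$ be nonzero vectors such that $u$ is not a scalar multiple of $v$. Let $$w=\frac{1}{\|u\|^2}\,u\otimes u+\frac{1}{\|v\|^2}\,v\otimes v\in H\otimes H,\qquad b=\frac{1}{\|w\|}\,w.$$ Then the entanglement entropy of $b$ satisfies $$E(b)\ge 2\,\frac{\left(\|u\|^2\|v\|^2-|\langle u,v\rangle|^2\right)^2}{\left(2\|u\|^2\|v\|^2+\langle u,v\rangle^2+\langle v,u\rangle^2\right)^2}.$$
   Context: $H\otimes H$ denotes the Hilbert space tensor product. For a unit vector $b\in H\otimes H$, let $P_b$ be the rank one orthogonal projection onto $\mathbb{C}b$. The partial trace $\rho=\mathrm{Tr}_2(P_b)$ is the operator on $H$ defined by $\langle x,\rho y\rangle=\sum_i\langle x\otimes e_i, P_b(y\otimes e_i)\rangle$ for all $x,y\in H$, where $\{e_i\}$ is any orthonormal basis of $H$. The entanglement entropy of $b$ is $E(b)=-\mathrm{Tr}(\rho\ln\rho)=-\sum_i\langle(\rho\ln\rho)e_i,e_i\rangle$, where $\rho\ln\rho$ is defined by continuous functional calculus (with $0\ln 0=0$); equivalently, $E(b)=-\sum_j\lambda_j\ln\lambda_j$ where $\lambda_j$ are the eigenvalues of $\rho$. *)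

theory Defs
  imports "HOL-Analysis.Analysis"
begin

text \<open>A separable complex Hilbert space is modelled (up to unitary isomorphism) as
  l2(I) for a countable index type I: square-summable functions I -> complex.
  Its Hilbert tensor square is l2(I x I), with (x tensor y)(i,j) = x i * y j.\<close>

definition is_l2 :: "('a \<Rightarrow> complex) \<Rightarrow> bool" where
  "is_l2 x \<longleftrightarrow> (\<lambda>i. (cmod (x i))\<^sup>2) summable_on UNIV"

definition l2_inner :: "('a \<Rightarrow> complex) \<Rightarrow> ('a \<Rightarrow> complex) \<Rightarrow> complex" where
  "l2_inner x y = (\<Sum>\<^sub>\<infinity>i. cnj (x i) * y i)"

definition l2_norm :: "('a \<Rightarrow> complex) \<Rightarrow> real" where
  "l2_norm x = sqrt (\<Sum>\<^sub>\<infinity>i. (cmod (x i))\<^sup>2)"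

definition tensor :: "('a \<Rightarrow> complex) \<Rightarrow> ('a \<Rightarrow> complex) \<Rightarrow> ('a \<times> 'a \<Rightarrow> complex)" where
  "tensor x y = (\<lambda>(i, j). x i * y j)"

definition basis_vec :: "'a \<Rightarrow> ('a \<Rightarrow> complex)" where
  "basis_vec k = (\<lambda>i. if i = k then 1 else 0)"

definition proj1 :: "('a \<Rightarrow> complex) \<Rightarrow> ('a \<Rightarrow> complex) \<Rightarrow> ('a \<Rightarrow> complex)" where
  "proj1 b z = (\<lambda>i. l2_inner b z * b i)"

text \<open>Partial trace over the second factor: the operator rho on l2(I) determined by
  <x, rho y> = sum_i <x tensor e_i, P (y tensor e_i)>; its k-th coordinate is <e_k, rho y>.\<close>
definition ptrace2 :: "(('a \<times> 'a \<Rightarrow> complex) \<Rightarrow> ('a \<times> 'a \<Rightarrow> complex))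
                      \<Rightarrow> ('a \<Rightarrow> complex) \<Rightarrow> ('a \<Rightarrow> complex)" where
  "ptrace2 P y = (\<lambda>k. \<Sum>\<^sub>\<infinity>i. l2_inner (tensor (basis_vec k) (basis_vec i))
                                       (P (tensor y (basis_vec i))))"

definition eigenspace_l2 :: "(('a \<Rightarrow> complex) \<Rightarrow> ('a \<Rightarrow> complex)) \<Rightarrow> complex \<Rightarrow> ('a \<Rightarrow> complex) set" where
  "eigenspace_l2 A \<mu> = {y. is_l2 y \<and> A y = (\<lambda>i. \<mu> * y i)}"

definition is_eigenvalue_l2 :: "(('a \<Rightarrow> complex) \<Rightarrow> ('a \<Rightarrow> complex)) \<Rightarrow> complex \<Rightarrow> bool" where
  "is_eigenvalue_l2 A \<mu> \<longleftrightarrow> (\<exists>y \<in> eigenspace_l2 A \<mu>. y \<noteq> (\<lambda>_. 0))"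

definition orthonormal_l2 :: "('a \<Rightarrow> complex) set \<Rightarrow> bool" where
  "orthonormal_l2 S \<longleftrightarrow> (\<forall>x\<in>S. \<forall>y\<in>S. l2_inner x y = (if x = y then 1 else 0))"

text \<open>Multiplicity of an eigenvalue = dimension of its eigenspace (finite for the nonzero
  eigenvalues of a trace-class operator).\<close>
definition eig_mult :: "(('a \<Rightarrow> complex) \<Rightarrow> ('a \<Rightarrow> complex)) \<Rightarrow> complex \<Rightarrow> nat" where
  "eig_mult A \<mu> = Sup {card S | S. finite S \<and> S \<subseteq> eigenspace_l2 A \<mu> \<and> orthonormal_l2 S}"

text \<open>Entanglement entropy E(b) = - sum_j lambda_j ln lambda_j over the eigenvalues of
  rho = Tr_2(P_b), counted with multiplicity (zero eigenvalues contribute 0 ln 0 = 0).\<close>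
definition ent_entropy :: "('a \<times> 'a \<Rightarrow> complex) \<Rightarrow> real" where
  "ent_entropy b =
     (let \<rho> = ptrace2 (proj1 b) in
      \<Sum>\<^sub>\<infinity>t\<in>{t::real. t \<noteq> 0 \<and> is_eigenvalue_l2 \<rho> (complex_of_real t)}.
          - (real (eig_mult \<rho> (complex_of_real t)) * (t * ln t)))"

end

theory Submission
  imports Defs
begin


lemma l2_summable_norm: "is_l2 x \<Longrightarrow> (\<lambda>i. (cmod (x i))\<^sup>2) summable_on UNIV"
  by (simp add: is_l2_def)

lemma inner_summable:
  assumes "is_l2 x" "is_l2 y"
  shows "(\<lambda>i. cnj (x i) * y i) summable_on UNIV"
proof -
  have s: "(\<lambda>i. (cmod (x i))\<^sup>2 + (cmod (y i))\<^sup>2) summable_on UNIV"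
    using assms by (intro summable_on_add) (auto simp: is_l2_def)
  have "(\<lambda>i. norm (cnj (x i) * y i)) summable_on UNIV"
  proof (rule summable_on_comparison_test[OF s])
    fix i
    have "cmod (x i) * cmod (y i) \<le> (cmod (x i))\<^sup>2 + (cmod (y i))\<^sup>2"
    proof -
      have "0 \<le> (cmod (x i) - cmod (y i))\<^sup>2" by simp
      moreover have "0 \<le> cmod (x i) * cmod (y i)" by simp
      ultimately show ?thesis unfolding power2_diff by linarith
    qed
    then show "norm (cnj (x i) * y i) \<le> (cmod (x i))\<^sup>2 + (cmod (y i))\<^sup>2"
      by (simp add: norm_mult)
  qed auto
  then show ?thesis
    by (simp add: summable_on_iff_abs_summable_on_complex)
qed

lemma l2_lin:
  assumes "is_l2 x" "is_l2 y"
  shows "is_l2 (\<lambda>i. a * x i + b * y i)"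
proof -
  have s: "(\<lambda>i. 2 * (cmod a)\<^sup>2 * (cmod (x i))\<^sup>2 + 2 * (cmod b)\<^sup>2 * (cmod (y i))\<^sup>2) summable_on UNIV"
    using assms by (intro summable_on_add summable_on_cmult_right) (auto simp: is_l2_def)
  show ?thesis unfolding is_l2_def
  proof (rule summable_on_comparison_test[OF s])
    fix i
    have "cmod (a * x i + b * y i) \<le> cmod a * cmod (x i) + cmod b * cmod (y i)"
      by (metis norm_mult norm_triangle_ineq)
    then have "(cmod (a * x i + b * y i))\<^sup>2 \<le> (cmod a * cmod (x i) + cmod b * cmod (y i))\<^sup>2"
      by (simp add: power_mono)
    also have "\<dots> \<le> 2 * (cmod a)\<^sup>2 * (cmod (x i))\<^sup>2 + 2 * (cmod b)\<^sup>2 * (cmod (y i))\<^sup>2"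
    proof -
      have "0 \<le> (cmod a * cmod (x i) - cmod b * cmod (y i))\<^sup>2" by simp
      then show ?thesis unfolding power2_diff power2_sum power_mult_distrib by linarith
    qed
    finally show "(cmod (a * x i + b * y i))\<^sup>2 \<le> 2 * (cmod a)\<^sup>2 * (cmod (x i))\<^sup>2 + 2 * (cmod b)\<^sup>2 * (cmod (y i))\<^sup>2" .
  qed auto
qed

lemma l2_scale: "is_l2 x \<Longrightarrow> is_l2 (\<lambda>i. a * x i)"
  using l2_lin[of x x a 0] by simp

lemma inner_lin_right:
  assumes "is_l2 x" "is_l2 y" "is_l2 z"
  shows "l2_inner x (\<lambda>i. a * y i + b * z i) = a * l2_inner x y + b * l2_inner x z"
proof -
  have "l2_inner x (\<lambda>i. a * y i + b * z i) = (\<Sum>\<^sub>\<infinity>i. a * (cnj (x i) * y i) + b * (cnj (x i) * z i))"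
    unfolding l2_inner_def by (simp add: algebra_simps)
  also have "\<dots> = (\<Sum>\<^sub>\<infinity>i. a * (cnj (x i) * y i)) + (\<Sum>\<^sub>\<infinity>i. b * (cnj (x i) * z i))"
    using assms by (intro infsum_add summable_on_cmult_right inner_summable)
  also have "\<dots> = a * l2_inner x y + b * l2_inner x z"
    unfolding l2_inner_def by (simp add: infsum_cmult_right')
  finally show ?thesis .
qed

lemma inner_scale_right: "l2_inner x (\<lambda>i. a * y i) = a * l2_inner x y"
proof -
  have "l2_inner x (\<lambda>i. a * y i) = (\<Sum>\<^sub>\<infinity>i. a * (cnj (x i) * y i))"
    unfolding l2_inner_def by (simp add: algebra_simps)
  then show ?thesis unfolding l2_inner_def by (simp add: infsum_cmult_right')
qed

lemma inner_cnj: "l2_inner y x = cnj (l2_inner x y)"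
proof -
  have "cnj (l2_inner x y) = (\<Sum>\<^sub>\<infinity>i. cnj (cnj (x i) * y i))"
    unfolding l2_inner_def by (rule infsum_cnj[symmetric])
  then show ?thesis unfolding l2_inner_def by (simp add: mult.commute)
qed

lemma inner_scale_left: "l2_inner (\<lambda>i. a * y i) x = cnj a * l2_inner y x"
proof -
  have "l2_inner (\<lambda>i. a * y i) x = cnj (l2_inner x (\<lambda>i. a * y i))" by (rule inner_cnj)
  also have "\<dots> = cnj a * cnj (l2_inner x y)" by (simp add: inner_scale_right)
  also have "cnj (l2_inner x y) = l2_inner y x" by (rule inner_cnj[symmetric])
  finally show ?thesis .
qed

lemma inner_lin_left:
  assumes "is_l2 x" "is_l2 y" "is_l2 z"
  shows "l2_inner (\<lambda>i. a * y i + b * z i) x = cnj a * l2_inner y x + cnj b * l2_inner z x"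
proof -
  have "l2_inner (\<lambda>i. a * y i + b * z i) x = cnj (l2_inner x (\<lambda>i. a * y i + b * z i))" by (rule inner_cnj)
  also have "\<dots> = cnj a * cnj (l2_inner x y) + cnj b * cnj (l2_inner x z)" using assms by (simp add: inner_lin_right)
  also have "cnj (l2_inner x y) = l2_inner y x" by (rule inner_cnj[symmetric])
  also have "cnj (l2_inner x z) = l2_inner z x" by (rule inner_cnj[symmetric])
  finally show ?thesis .
qed

lemma inner_self:
  assumes "is_l2 x"
  shows "l2_inner x x = complex_of_real ((l2_norm x)\<^sup>2)"
proof -
  have "l2_inner x x = (\<Sum>\<^sub>\<infinity>i. complex_of_real ((cmod (x i))\<^sup>2))"
    unfolding l2_inner_def by (intro infsum_cong) (metis complex_norm_square mult.commute)
  also have "\<dots> = complex_of_real (\<Sum>\<^sub>\<infinity>i. (cmod (x i))\<^sup>2)"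
    using assms unfolding is_l2_def by (metis has_sum_infsum has_sum_of_real infsumI)
  also have "(\<Sum>\<^sub>\<infinity>i. (cmod (x i))\<^sup>2) = (l2_norm x)\<^sup>2"
    unfolding l2_norm_def by (simp add: infsum_nonneg)
  finally show ?thesis .
qed

lemma norm_pos:
  assumes "is_l2 x" "x \<noteq> (\<lambda>_. 0)"
  shows "l2_norm x > 0"
proof -
  obtain i0 where "x i0 \<noteq> 0" using assms by auto
  then have "0 < (\<Sum>i\<in>{i0}. (cmod (x i))\<^sup>2)" by simp
  also have "\<dots> \<le> (\<Sum>\<^sub>\<infinity>i. (cmod (x i))\<^sup>2)"
    using assms(1) unfolding is_l2_def by (intro finite_sum_le_infsum) auto
  finally show ?thesis unfolding l2_norm_def by simp
qed

lemma prod_abs_summable: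
  fixes f g :: "'a \<Rightarrow> 'c::{real_normed_div_algebra, banach, second_countable_topology}"
  assumes "(\<lambda>i. norm (f i)) summable_on UNIV" "(\<lambda>i. norm (g i)) summable_on UNIV"
  shows "(\<lambda>x. norm ((\<lambda>(i,j). f i * g j) x)) summable_on UNIV"
    and "(\<Sum>\<^sub>\<infinity>(i,j). f i * g j) = (\<Sum>\<^sub>\<infinity>i. f i) * (\<Sum>\<^sub>\<infinity>j. g j)"
proof -
  have "(\<lambda>x. norm ((\<lambda>(i,j). f i * g j) x)) summable_on Sigma UNIV (\<lambda>_. UNIV)"
  proof (rule iffD2[OF Infinite_Sum.abs_summable_on_Sigma_iff[where f="\<lambda>(i,j). f i * g j" and A=UNIV and B="\<lambda>_. UNIV"]], intro conjI ballI)
    fix x show "(\<lambda>y. norm (case (x, y) of (i, j) \<Rightarrow> f i * g j)) summable_on UNIV"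
      using assms(2) by (simp add: norm_mult summable_on_cmult_right)
  next
    have eq: "\<And>x. (\<Sum>\<^sub>\<infinity>y. norm (case (x, y) of (i, j) \<Rightarrow> f i * g j)) = norm (f x) * (\<Sum>\<^sub>\<infinity>y. norm (g y))"
      by (simp add: norm_mult infsum_cmult_right')
    have s: "(\<lambda>x. norm (norm (f x) * (\<Sum>\<^sub>\<infinity>y. norm (g y)))) summable_on UNIV"
      using assms(1) by (simp add: abs_mult infsum_nonneg summable_on_cmult_left)
    show "(\<lambda>x. norm (\<Sum>\<^sub>\<infinity>y. norm (case (x, y) of (i, j) \<Rightarrow> f i * g j))) summable_on UNIV"
      using s by (simp only: eq)
  qed
  then show 1: "(\<lambda>x. norm ((\<lambda>(i,j). f i * g j) x)) summable_on UNIV" by simp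
  have "(\<lambda>(i,j). f i * g j) summable_on Sigma UNIV (\<lambda>_. UNIV)"
    using 1 abs_summable_summable by fastforce
  then have "(\<Sum>\<^sub>\<infinity>i. \<Sum>\<^sub>\<infinity>j. f i * g j) = (\<Sum>\<^sub>\<infinity>(i,j)\<in>Sigma UNIV (\<lambda>_. UNIV). f i * g j)"
    using infsum_Sigma_banach[of "\<lambda>(i,j). f i * g j" UNIV "\<lambda>_. UNIV"] by simp
  moreover have "(\<Sum>\<^sub>\<infinity>i. \<Sum>\<^sub>\<infinity>j. f i * g j) = (\<Sum>\<^sub>\<infinity>i. f i) * (\<Sum>\<^sub>\<infinity>j. g j)"
    by (simp add: infsum_cmult_right' infsum_cmult_left')
  ultimately show "(\<Sum>\<^sub>\<infinity>(i,j). f i * g j) = (\<Sum>\<^sub>\<infinity>i. f i) * (\<Sum>\<^sub>\<infinity>j. g j)" by simp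
qed

lemma l2_tensor:
  assumes "is_l2 x" "is_l2 y"
  shows "is_l2 (tensor x y)"
proof -
  have a: "(\<lambda>i. norm ((cmod (x i))\<^sup>2)) summable_on UNIV" "(\<lambda>i. norm ((cmod (y i))\<^sup>2)) summable_on UNIV"
    using assms unfolding is_l2_def by simp_all
  have "(\<lambda>pr. norm ((\<lambda>(i,j). (cmod (x i))\<^sup>2 * (cmod (y j))\<^sup>2) pr)) summable_on UNIV"
    by (rule prod_abs_summable(1)[OF a])
  then have "(\<lambda>(i,j). (cmod (x i))\<^sup>2 * (cmod (y j))\<^sup>2) summable_on UNIV"
    by (rule abs_summable_summable)
  moreover have "(\<lambda>p. (cmod (tensor x y p))\<^sup>2) = (\<lambda>(i,j). (cmod (x i))\<^sup>2 * (cmod (y j))\<^sup>2)"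
    by (auto simp: tensor_def norm_mult power_mult_distrib)
  ultimately show ?thesis unfolding is_l2_def by simp
qed

lemma inner_tensor:
  assumes "is_l2 x" "is_l2 y" "is_l2 z" "is_l2 t"
  shows "l2_inner (tensor x y) (tensor z t) = l2_inner x z * l2_inner y t"
proof -
  have a: "(\<lambda>i. norm (cnj (x i) * z i)) summable_on UNIV" "(\<lambda>i. norm (cnj (y i) * t i)) summable_on UNIV"
    using summable_on_iff_abs_summable_on_complex[THEN iffD1, OF inner_summable[OF assms(1,3)]]
      summable_on_iff_abs_summable_on_complex[THEN iffD1, OF inner_summable[OF assms(2,4)]] by auto
  have "l2_inner (tensor x y) (tensor z t) = (\<Sum>\<^sub>\<infinity>(i,j). (cnj (x i) * z i) * (cnj (y j) * t j))"
    unfolding l2_inner_def tensor_def by (rule infsum_cong) (auto simp: algebra_simps)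
  also have "\<dots> = l2_inner x z * l2_inner y t"
    unfolding l2_inner_def by (rule prod_abs_summable(2)[OF a])
  finally show ?thesis .
qed

lemma infsum_single_pt: "(\<Sum>\<^sub>\<infinity>x. if x = a then (c::complex) else 0) = c"
proof -
  have "(\<Sum>\<^sub>\<infinity>x. if x = a then (c::complex) else 0) = (\<Sum>\<^sub>\<infinity>x\<in>{a}. if x = a then (c::complex) else 0)"
    by (rule infsum_cong_neutral) auto
  then show ?thesis by simp
qed

lemma inner_basis_tensor: "l2_inner (tensor (basis_vec k) (basis_vec i)) F = F (k, i)"
proof -
  have "l2_inner (tensor (basis_vec k) (basis_vec i)) F = (\<Sum>\<^sub>\<infinity>x. if x = (k,i) then F (k,i) else 0)"
    unfolding l2_inner_def tensor_def basis_vec_def by (rule infsum_cong) (auto split: if_splits)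
  then show ?thesis by (simp add: infsum_single_pt)
qed

lemma inner_tensor_basis:
  "l2_inner B (tensor y (basis_vec i)) = (\<Sum>\<^sub>\<infinity>j. cnj (B (j, i)) * y j)"
proof -
  let ?g = "\<lambda>x. cnj (B x) * tensor y (basis_vec i) x"
  have "l2_inner B (tensor y (basis_vec i)) = infsum ?g UNIV" unfolding l2_inner_def ..
  also have "\<dots> = infsum ?g (range (\<lambda>j. (j, i)))"
    by (rule infsum_cong_neutral) (auto simp: tensor_def basis_vec_def split: if_splits)
  also have "\<dots> = infsum (?g \<circ> (\<lambda>j. (j, i))) UNIV"
    by (rule infsum_reindex) (auto simp: inj_on_def)
  also have "\<dots> = (\<Sum>\<^sub>\<infinity>j. cnj (B (j, i)) * y j)"
    by (simp add: tensor_def basis_vec_def o_def)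
  finally show ?thesis .
qed
lemma infsum4:
  fixes f1 f2 f3 f4 :: "'a \<Rightarrow> complex"
  assumes "f1 summable_on UNIV" "f2 summable_on UNIV" "f3 summable_on UNIV" "f4 summable_on UNIV"
  shows "(\<Sum>\<^sub>\<infinity>i. a1 * f1 i + a2 * f2 i + a3 * f3 i + a4 * f4 i)
       = a1 * infsum f1 UNIV + a2 * infsum f2 UNIV + a3 * infsum f3 UNIV + a4 * infsum f4 UNIV"
proof -
  have s: "(\<lambda>i. a1 * f1 i) summable_on UNIV" "(\<lambda>i. a2 * f2 i) summable_on UNIV"
     "(\<lambda>i. a3 * f3 i) summable_on UNIV" "(\<lambda>i. a4 * f4 i) summable_on UNIV"
    using assms by (auto intro: summable_on_cmult_right)
  have "(\<Sum>\<^sub>\<infinity>i. a1 * f1 i + a2 * f2 i + a3 * f3 i + a4 * f4 i)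
      = (\<Sum>\<^sub>\<infinity>i. a1 * f1 i + a2 * f2 i + a3 * f3 i) + (\<Sum>\<^sub>\<infinity>i. a4 * f4 i)"
    using s by (intro infsum_add summable_on_add) auto
  also have "(\<Sum>\<^sub>\<infinity>i. a1 * f1 i + a2 * f2 i + a3 * f3 i)
      = (\<Sum>\<^sub>\<infinity>i. a1 * f1 i + a2 * f2 i) + (\<Sum>\<^sub>\<infinity>i. a3 * f3 i)"
    using s by (intro infsum_add summable_on_add) auto
  also have "(\<Sum>\<^sub>\<infinity>i. a1 * f1 i + a2 * f2 i) = (\<Sum>\<^sub>\<infinity>i. a1 * f1 i) + (\<Sum>\<^sub>\<infinity>i. a2 * f2 i)"
    using s by (intro infsum_add) auto
  finally show ?thesis by (simp add: infsum_cmult_right')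
qed

lemma rho_formula:
  assumes p: "is_l2 p" and q: "is_l2 q" and pp: "l2_inner p p = 1" and qq: "l2_inner q q = 1"
    and y: "is_l2 y"
    and bdef: "B = (\<lambda>x. complex_of_real r * (tensor p p x + tensor q q x))"
  shows "ptrace2 (proj1 B) y k = complex_of_real (r\<^sup>2) *
     ((l2_inner p y + l2_inner q p * l2_inner q y) * p k + (l2_inner p q * l2_inner p y + l2_inner q y) * q k)"
proof -
  define \<alpha> where "\<alpha> = l2_inner p y"
  define \<beta> where "\<beta> = l2_inner q y"
  define R where "R = complex_of_real r"
  have cR: "cnj R = R" unfolding R_def by simp
  have inB: "l2_inner B (tensor y (basis_vec i)) = R * (cnj (p i) * \<alpha> + cnj (q i) * \<beta>)" for i
  proof -
    have "l2_inner B (tensor y (basis_vec i)) = (\<Sum>\<^sub>\<infinity>j. cnj (B (j, i)) * y j)"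
      by (rule inner_tensor_basis)
    also have "\<dots> = (\<Sum>\<^sub>\<infinity>j. (R * cnj (p i)) * (cnj (p j) * y j) + (R * cnj (q i)) * (cnj (q j) * y j))"
      by (rule infsum_cong) (simp add: bdef tensor_def R_def algebra_simps)
    also have "\<dots> = (\<Sum>\<^sub>\<infinity>j. (R * cnj (p i)) * (cnj (p j) * y j)) + (\<Sum>\<^sub>\<infinity>j. (R * cnj (q i)) * (cnj (q j) * y j))"
      using p q y by (intro infsum_add summable_on_cmult_right inner_summable)
    also have "\<dots> = R * (cnj (p i) * \<alpha> + cnj (q i) * \<beta>)"
      unfolding infsum_cmult_right' \<alpha>_def \<beta>_def l2_inner_def by (simp add: algebra_simps)
    finally show ?thesis .
  qed
  have "ptrace2 (proj1 B) y k = (\<Sum>\<^sub>\<infinity>i. l2_inner B (tensor y (basis_vec i)) * B (k, i))"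
    unfolding ptrace2_def inner_basis_tensor proj1_def ..
  also have "\<dots> = (\<Sum>\<^sub>\<infinity>i. (R*R*\<alpha>*p k) * (cnj (p i) * p i) + (R*R*\<alpha>*q k) * (cnj (p i) * q i)
        + (R*R*\<beta>*p k) * (cnj (q i) * p i) + (R*R*\<beta>*q k) * (cnj (q i) * q i))"
    apply (rule infsum_cong)
    apply (subst inB)
    apply (simp add: bdef tensor_def R_def algebra_simps)
    done
  also have "\<dots> = (R*R*\<alpha>*p k) * l2_inner p p + (R*R*\<alpha>*q k) * l2_inner p q
        + (R*R*\<beta>*p k) * l2_inner q p + (R*R*\<beta>*q k) * l2_inner q q"
    unfolding l2_inner_def using p q by (intro infsum4 inner_summable)
  also have "\<dots> = complex_of_real (r\<^sup>2) *
     ((l2_inner p y + l2_inner q p * l2_inner q y) * p k + (l2_inner p q * l2_inner p y + l2_inner q y) * q k)"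
    by (simp add: pp qq R_def \<alpha>_def \<beta>_def algebra_simps power2_eq_square)
  finally show ?thesis .
qed
lemma eig_mult_eq:
  assumes "\<And>S. finite S \<Longrightarrow> S \<subseteq> eigenspace_l2 A \<mu> \<Longrightarrow> orthonormal_l2 S \<Longrightarrow> card S \<le> m"
    and "finite S0" "S0 \<subseteq> eigenspace_l2 A \<mu>" "orthonormal_l2 S0" "card S0 = m"
  shows "eig_mult A \<mu> = m"
  unfolding eig_mult_def
proof (rule cSup_eq_maximum)
  show "m \<in> {card S |S. finite S \<and> S \<subseteq> eigenspace_l2 A \<mu> \<and> orthonormal_l2 S}"
    using assms(2-5) by blast
qed (use assms(1) in blast)

lemma card_le1:
  assumes "finite S" "orthonormal_l2 S" "\<And>y. y \<in> S \<Longrightarrow> \<exists>a. y = (\<lambda>i. a * g i)"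
  shows "card S \<le> 1"
proof -
  have "\<forall>x\<in>S. \<forall>y\<in>S. x = y"
  proof (intro ballI, rule ccontr)
    fix x y assume xy: "x \<in> S" "y \<in> S" "x \<noteq> y"
    obtain a where a: "x = (\<lambda>i. a * g i)" using assms(3) xy(1) by blast
    obtain b where b: "y = (\<lambda>i. b * g i)" using assms(3) xy(2) by blast
    have "l2_inner x y = 0" "l2_inner x x = 1" "l2_inner y y = 1"
      using assms(2) xy unfolding orthonormal_l2_def by auto
    then have "cnj a * (b * l2_inner g g) = 0" "cnj a * (a * l2_inner g g) = 1" "cnj b * (b * l2_inner g g) = 1"
      unfolding a b inner_scale_left inner_scale_right by auto
    then show False by auto
  qed
  then show ?thesis using card_le_Suc0_iff_eq[OF assms(1)] by simp
qed

lemma la3: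
  fixes s1 s2 s3 t1 t2 t3 :: complex
  shows "\<exists>a1 a2 a3. (a1 \<noteq> 0 \<or> a2 \<noteq> 0 \<or> a3 \<noteq> 0) \<and> a1 * s1 + a2 * s2 + a3 * s3 = 0 \<and> a1 * t1 + a2 * t2 + a3 * t3 = 0"
proof (cases "s1 * t2 - s2 * t1 = 0")
  case False
  show ?thesis
    by (rule exI[of _ "s2 * t3 - s3 * t2"], rule exI[of _ "s3 * t1 - s1 * t3"], rule exI[of _ "s1 * t2 - s2 * t1"])
       (use False in \<open>auto simp: algebra_simps\<close>)
next
  case True
  show ?thesis
  proof (cases "s1 = 0 \<and> s2 = 0")
    case False
    show ?thesis
      by (rule exI[of _ s2], rule exI[of _ "-s1"], rule exI[of _ 0])
         (use False True in \<open>auto simp: algebra_simps\<close>)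
  next
    case s0: True
    show ?thesis
    proof (cases "t1 = 0 \<and> t2 = 0")
      case False
      show ?thesis
        by (rule exI[of _ t2], rule exI[of _ "-t1"], rule exI[of _ 0])
           (use False s0 in \<open>auto simp: algebra_simps\<close>)
    next
      case True
      show ?thesis
        by (rule exI[of _ 1], rule exI[of _ 0], rule exI[of _ 0]) (use True s0 in auto)
    qed
  qed
qed

lemma inner_lin3:
  assumes "is_l2 x" "is_l2 y1" "is_l2 y2" "is_l2 y3"
  shows "l2_inner x (\<lambda>i. a1 * y1 i + a2 * y2 i + a3 * y3 i) = a1 * l2_inner x y1 + a2 * l2_inner x y2 + a3 * l2_inner x y3"
proof -
  have e: "(\<lambda>i. a1 * y1 i + a2 * y2 i + a3 * y3 i) = (\<lambda>i. 1 * (a1 * y1 i + a2 * y2 i) + a3 * y3 i)" by simp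
  have l: "is_l2 (\<lambda>i. a1 * y1 i + a2 * y2 i)" using assms l2_lin by blast
  show ?thesis unfolding e
    using inner_lin_right[OF assms(1) l assms(4), of 1 a3] inner_lin_right[OF assms(1,2,3), of a1 a2] by simp
qed

lemma card_le2:
  assumes p: "is_l2 p" and q: "is_l2 q" and fin: "finite S" and on: "orthonormal_l2 S"
    and sp: "\<And>y. y \<in> S \<Longrightarrow> \<exists>a b. y = (\<lambda>i. a * p i + b * q i)"
  shows "card S \<le> 2"
proof (rule ccontr)
  assume "\<not> card S \<le> 2"
  then have "3 \<le> card S" by simp
  then obtain T where T: "T \<subseteq> S" "card T = 3" "finite T" by (rule obtain_subset_with_card_n)
  from T(2) obtain z1 z2 z3 where z: "T = {z1, z2, z3}" "z1 \<noteq> z2" "z2 \<noteq> z3" "z1 \<noteq> z3"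
    unfolding card_3_iff by blast
  have zS: "z1 \<in> S" "z2 \<in> S" "z3 \<in> S" using T z by auto
  obtain s1 t1 where 1: "z1 = (\<lambda>i. s1 * p i + t1 * q i)" using sp zS by blast
  obtain s2 t2 where 2: "z2 = (\<lambda>i. s2 * p i + t2 * q i)" using sp zS by blast
  obtain s3 t3 where 3: "z3 = (\<lambda>i. s3 * p i + t3 * q i)" using sp zS by blast
  have l2: "is_l2 z1" "is_l2 z2" "is_l2 z3" unfolding 1 2 3 using p q l2_lin by blast+
  obtain a1 a2 a3 where a: "a1 \<noteq> 0 \<or> a2 \<noteq> 0 \<or> a3 \<noteq> 0" "a1 * s1 + a2 * s2 + a3 * s3 = 0" "a1 * t1 + a2 * t2 + a3 * t3 = 0"
    using la3[of s1 s2 s3 t1 t2 t3] by auto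
  have zero: "(\<lambda>i. a1 * z1 i + a2 * z2 i + a3 * z3 i) = (\<lambda>i. 0)"
  proof
    fix i
    have "a1 * z1 i + a2 * z2 i + a3 * z3 i = (a1 * s1 + a2 * s2 + a3 * s3) * p i + (a1 * t1 + a2 * t2 + a3 * t3) * q i"
      unfolding 1 2 3 by (simp add: algebra_simps)
    then show "a1 * z1 i + a2 * z2 i + a3 * z3 i = 0" using a by simp
  qed
  have o: "\<And>x y. x \<in> S \<Longrightarrow> y \<in> S \<Longrightarrow> l2_inner x y = (if x = y then 1 else 0)"
    using on unfolding orthonormal_l2_def by blast
  have z0: "l2_inner x (\<lambda>i. 0) = 0" for x :: "'a \<Rightarrow> complex" unfolding l2_inner_def by simp
  have ii: "l2_inner z1 z1 = 1" "l2_inner z2 z2 = 1" "l2_inner z3 z3 = 1"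
    using o zS by auto
  have ij: "l2_inner z1 z2 = 0" "l2_inner z1 z3 = 0" "l2_inner z2 z1 = 0" "l2_inner z2 z3 = 0"
     "l2_inner z3 z1 = 0" "l2_inner z3 z2 = 0"
    using o[OF zS(1) zS(2)] o[OF zS(1) zS(3)] o[OF zS(2) zS(1)] o[OF zS(2) zS(3)] o[OF zS(3) zS(1)] o[OF zS(3) zS(2)] z(2-4)
    by auto
  have "l2_inner z1 (\<lambda>i. a1 * z1 i + a2 * z2 i + a3 * z3 i) = 0"
       "l2_inner z2 (\<lambda>i. a1 * z1 i + a2 * z2 i + a3 * z3 i) = 0"
       "l2_inner z3 (\<lambda>i. a1 * z1 i + a2 * z2 i + a3 * z3 i) = 0"
    by (simp_all only: zero z0)
  then have "a1 = 0" "a2 = 0" "a3 = 0"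
    by (simp_all only: inner_lin3[OF l2(1) l2] inner_lin3[OF l2(2) l2] inner_lin3[OF l2(3) l2] ii ij) simp_all
  then show False using a(1) by simp
qed
lemma alg1:
  fixes K c d T \<alpha> \<beta> :: complex
  assumes K0: "K \<noteq> 0" and KE: "K = 2 + c\<^sup>2 + d\<^sup>2"
    and e1: "K * (T * \<alpha>) = (\<alpha> + d * \<beta>) + (c * \<alpha> + \<beta>) * c"
    and e2: "K * (T * \<beta>) = (\<alpha> + d * \<beta>) * d + (c * \<alpha> + \<beta>)"
    and nz: "\<alpha> \<noteq> 0 \<or> \<beta> \<noteq> 0"
  shows "K\<^sup>2 * T\<^sup>2 - K\<^sup>2 * T + (1 - c * d)\<^sup>2 = 0"
proof -
  define X where "X = K * T - 1 - c\<^sup>2"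
  define Y where "Y = K * T - 1 - d\<^sup>2"
  define s where "s = c + d"
  have f1: "X * \<alpha> = s * \<beta>"
    using e1 unfolding X_def s_def by (simp add: algebra_simps power2_eq_square)
  have f2: "Y * \<beta> = s * \<alpha>"
    using e2 unfolding Y_def s_def by (simp add: algebra_simps power2_eq_square)
  have g1: "(X * Y - s\<^sup>2) * \<alpha> = 0"
  proof -
    have "(X * Y - s\<^sup>2) * \<alpha> = Y * (X * \<alpha>) - s * (s * \<alpha>)" by (simp add: algebra_simps power2_eq_square)
    also have "\<dots> = Y * (s * \<beta>) - s * (Y * \<beta>)" by (simp only: f1 f2)
    finally show ?thesis by (simp add: algebra_simps)
  qed
  have g2: "(X * Y - s\<^sup>2) * \<beta> = 0"
  proof -
    have "(X * Y - s\<^sup>2) * \<beta> = X * (Y * \<beta>) - s * (s * \<beta>)" by (simp add: algebra_simps power2_eq_square)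
    also have "\<dots> = X * (s * \<alpha>) - s * (X * \<alpha>)" by (simp only: f1 f2)
    finally show ?thesis by (simp add: algebra_simps)
  qed
  have "X * Y - s\<^sup>2 = 0" using g1 g2 nz by auto
  moreover have "X * Y - s\<^sup>2 = K\<^sup>2 * T\<^sup>2 - K * T * (2 + c\<^sup>2 + d\<^sup>2) + (1 - c * d)\<^sup>2"
    unfolding X_def Y_def s_def by algebra
  ultimately have "K\<^sup>2 * T\<^sup>2 - K * T * K + (1 - c * d)\<^sup>2 = 0" using KE by simp
  then show ?thesis by (simp add: power2_eq_square mult_ac)
qed
locale rk2 =
  fixes p q :: "'a \<Rightarrow> complex" and c :: complex and N :: real
    and \<rho> :: "('a \<Rightarrow> complex) \<Rightarrow> 'a \<Rightarrow> complex"
  assumes p_l2: "is_l2 p" and q_l2: "is_l2 q" and pp: "l2_inner p p = 1" and qq: "l2_inner q q = 1"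
    and pq: "l2_inner p q = c" and c_lt: "cmod c < 1"
    and N_eq: "complex_of_real N = 2 + c\<^sup>2 + (cnj c)\<^sup>2"
    and rho: "\<And>y. is_l2 y \<Longrightarrow> \<rho> y = (\<lambda>k. ((l2_inner p y + cnj c * l2_inner q y) / complex_of_real N) * p k
                                   + ((c * l2_inner p y + l2_inner q y) / complex_of_real N) * q k)"
begin

lemma qp: "l2_inner q p = cnj c"
  using inner_cnj[of q p] pq by simp

lemma N_re: "N = 2 + 2 * (Re c)\<^sup>2 - 2 * (Im c)\<^sup>2"
proof -
  have "Re (complex_of_real N) = Re (2 + c\<^sup>2 + (cnj c)\<^sup>2)" using N_eq by simp
  then show ?thesis by (simp add: power2_eq_square)
qed

lemma cc_lt: "(Re c)\<^sup>2 + (Im c)\<^sup>2 < 1"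
proof -
  have "(cmod c)\<^sup>2 < 1" using c_lt by (simp add: abs_square_less_1)
  then show ?thesis by (simp add: cmod_power2)
qed

lemma N_pos: "N > 0"
  using N_re cc_lt by (smt (verit) zero_le_power2)

lemma cd_eq: "c * cnj c = complex_of_real ((Re c)\<^sup>2 + (Im c)\<^sup>2)"
  by (metis complex_norm_square cmod_power2)

lemma K_nz: "complex_of_real N \<noteq> 0" using N_pos by simp

lemma inner_pq_comb:
  "l2_inner p (\<lambda>k. A * p k + B * q k) = A + B * c"
  "l2_inner q (\<lambda>k. A * p k + B * q k) = A * cnj c + B"
  using inner_lin_right[OF p_l2 p_l2 q_l2, of A B] inner_lin_right[OF q_l2 p_l2 q_l2, of A B]
  by (simp_all add: pp qq pq qp)

lemma rho_eqs:
  assumes y: "is_l2 y" and ev: "\<rho> y = (\<lambda>i. complex_of_real t * y i)"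
  shows "complex_of_real N * (complex_of_real t * l2_inner p y)
           = (l2_inner p y + cnj c * l2_inner q y) + (c * l2_inner p y + l2_inner q y) * c"
    and "complex_of_real N * (complex_of_real t * l2_inner q y)
           = (l2_inner p y + cnj c * l2_inner q y) * cnj c + (c * l2_inner p y + l2_inner q y)"
proof -
  let ?K = "complex_of_real N"
  let ?A = "(l2_inner p y + cnj c * l2_inner q y) / ?K"
  let ?B = "(c * l2_inner p y + l2_inner q y) / ?K"
  have "l2_inner p (\<rho> y) = ?A + ?B * c" "l2_inner q (\<rho> y) = ?A * cnj c + ?B"
    unfolding rho[OF y] by (rule inner_pq_comb)+
  moreover have "l2_inner p (\<rho> y) = complex_of_real t * l2_inner p y"
     "l2_inner q (\<rho> y) = complex_of_real t * l2_inner q y"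
    unfolding ev by (simp_all add: inner_scale_right)
  ultimately have 1: "complex_of_real t * l2_inner p y = ?A + ?B * c"
    and 2: "complex_of_real t * l2_inner q y = ?A * cnj c + ?B" by simp_all
  show "?K * (complex_of_real t * l2_inner p y)
           = (l2_inner p y + cnj c * l2_inner q y) + (c * l2_inner p y + l2_inner q y) * c"
    unfolding 1 using K_nz by (simp add: field_simps)
  show "?K * (complex_of_real t * l2_inner q y)
           = (l2_inner p y + cnj c * l2_inner q y) * cnj c + (c * l2_inner p y + l2_inner q y)"
    unfolding 2 using K_nz by (simp add: field_simps)
qed

lemma eig_root:
  assumes t0: "t \<noteq> 0" and ev: "is_eigenvalue_l2 \<rho> (complex_of_real t)"
  shows "N\<^sup>2 * t\<^sup>2 - N\<^sup>2 * t + (1 - ((Re c)\<^sup>2 + (Im c)\<^sup>2))\<^sup>2 = 0"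
proof -
  obtain y where y: "is_l2 y" "\<rho> y = (\<lambda>i. complex_of_real t * y i)" "y \<noteq> (\<lambda>_. 0)"
    using ev unfolding is_eigenvalue_l2_def eigenspace_l2_def by blast
  have nz: "l2_inner p y \<noteq> 0 \<or> l2_inner q y \<noteq> 0"
  proof (rule ccontr)
    assume "\<not> ?thesis"
    then have "\<rho> y = (\<lambda>k. 0)" using rho[OF y(1)] by simp
    then have "\<And>i. complex_of_real t * y i = 0" using y(2) by metis
    then show False using y(3) t0 by auto
  qed
  have "(complex_of_real N)\<^sup>2 * (complex_of_real t)\<^sup>2 - (complex_of_real N)\<^sup>2 * complex_of_real t
          + (1 - c * cnj c)\<^sup>2 = 0"
    by (rule alg1[OF K_nz N_eq rho_eqs[OF y(1,2)] nz])
  then have "complex_of_real (N\<^sup>2 * t\<^sup>2 - N\<^sup>2 * t + (1 - ((Re c)\<^sup>2 + (Im c)\<^sup>2))\<^sup>2) = 0"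
    unfolding cd_eq by simp
  then show ?thesis by (simp only: of_real_eq_0_iff)
qed

end
lemma comb_div: "((a::complex) * b + c * d) / e = (a / e) * b + (c / e) * d"
  by (simp add: add_divide_distrib)

context rk2 begin

lemma rho_scale:
  assumes y: "is_l2 y"
  shows "\<rho> (\<lambda>i. a * y i) = (\<lambda>i. a * \<rho> y i)"
  using rho[OF y] rho[OF l2_scale[OF y, of a]]
  by (simp add: inner_scale_right algebra_simps add_divide_distrib)

lemma eig_span:
  assumes t0: "t \<noteq> 0" and y: "is_l2 y" and ev: "\<rho> y = (\<lambda>i. complex_of_real t * y i)"
  shows "\<exists>a b. y = (\<lambda>k. a * p k + b * q k)"
proof -
  let ?K = "complex_of_real N"
  let ?A = "(l2_inner p y + cnj c * l2_inner q y) / ?K"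
  let ?B = "(c * l2_inner p y + l2_inner q y) / ?K"
  have "y = (\<lambda>k. (?A / complex_of_real t) * p k + (?B / complex_of_real t) * q k)"
  proof
    fix k
    have h: "complex_of_real t * y k = ?A * p k + ?B * q k"
      using fun_cong[OF ev, of k] rho[OF y] by simp
    have "y k = (complex_of_real t * y k) / complex_of_real t" using t0 by simp
    also have "\<dots> = (?A * p k + ?B * q k) / complex_of_real t" by (simp only: h)
    also have "\<dots> = (?A / complex_of_real t) * p k + (?B / complex_of_real t) * q k"
      by (rule comb_div)
    finally show "y k = (?A / complex_of_real t) * p k + (?B / complex_of_real t) * q k" .
  qed
  then show ?thesis by blast
qed

definition "cc = (Re c)\<^sup>2 + (Im c)\<^sup>2"
definition "sg = sqrt (N\<^sup>2 - 4 * (1 - cc)\<^sup>2)"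
definition "t1 = (N + sg) / (2 * N)"
definition "t2 = (N - sg) / (2 * N)"

lemma cc_lt1: "cc < 1" using cc_lt unfolding cc_def .
lemma cc_ge0: "cc \<ge> 0" unfolding cc_def by simp

lemma disc: "N\<^sup>2 - 4 * (1 - cc)\<^sup>2 = 16 * (Re c)\<^sup>2 * (1 - (Im c)\<^sup>2)"
  unfolding cc_def N_re by (simp add: power2_eq_square algebra_simps)

lemma disc_nonneg: "N\<^sup>2 - 4 * (1 - cc)\<^sup>2 \<ge> 0"
proof -
  have "(Im c)\<^sup>2 \<le> 1" using cc_lt by (smt (verit) zero_le_power2)
  then have "0 \<le> 16 * (Re c)\<^sup>2 * (1 - (Im c)\<^sup>2)" by simp
  then show ?thesis using disc by linarith
qed

lemma sg_sq: "sg\<^sup>2 = N\<^sup>2 - 4 * (1 - cc)\<^sup>2"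
  unfolding sg_def by (rule real_sqrt_pow2[OF disc_nonneg])

lemma sg_nonneg: "sg \<ge> 0" unfolding sg_def by (rule real_sqrt_ge_zero[OF disc_nonneg])

lemma sg_lt: "sg < N"
proof -
  have "sg\<^sup>2 < N\<^sup>2" unfolding sg_sq using cc_lt1 by simp
  then show ?thesis using N_pos sg_nonneg by (simp add: power_less_imp_less_base)
qed

lemma t2_pos: "t2 > 0" unfolding t2_def using sg_lt N_pos by simp
lemma t1_pos: "t1 > 0" unfolding t1_def using sg_nonneg N_pos by simp
lemma t_sum: "t1 + t2 = 1" unfolding t1_def t2_def using N_pos by (simp add: field_simps)
lemma t_prod: "t1 * t2 = (1 - cc)\<^sup>2 / N\<^sup>2"
proof -
  have "t1 * t2 = (N\<^sup>2 - sg\<^sup>2) / (4 * N\<^sup>2)"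
    unfolding t1_def t2_def using N_pos by (simp add: field_simps power2_eq_square)
  also have "\<dots> = (1 - cc)\<^sup>2 / N\<^sup>2" unfolding sg_sq using N_pos by (simp add: field_simps)
  finally show ?thesis .
qed

lemma root_iff: "N\<^sup>2 * t\<^sup>2 - N\<^sup>2 * t + (1 - cc)\<^sup>2 = 0 \<longleftrightarrow> t = t1 \<or> t = t2"
proof -
  have "N\<^sup>2 * t\<^sup>2 - N\<^sup>2 * t + (1 - cc)\<^sup>2 = N\<^sup>2 * ((t - t1) * (t - t2))"
  proof -
    have "(t - t1) * (t - t2) = t\<^sup>2 - (t1 + t2) * t + t1 * t2" by (simp add: algebra_simps power2_eq_square)
    then show ?thesis unfolding t_sum t_prod using N_pos by (simp add: field_simps)
  qed
  then show ?thesis using N_pos by simp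
qed

lemma t12_ne: "Re c \<noteq> 0 \<Longrightarrow> t1 \<noteq> t2"
proof -
  assume a: "Re c \<noteq> 0"
  have "(Im c)\<^sup>2 < 1" using cc_lt by (smt (verit) zero_le_power2)
  then have "sg\<^sup>2 > 0" unfolding sg_sq disc using a by simp
  then have "sg \<noteq> 0" by auto
  then show ?thesis unfolding t1_def t2_def using N_pos by (simp add: field_simps)
qed

lemma t12_half: "Re c = 0 \<Longrightarrow> t1 = 1/2 \<and> t2 = 1/2"
proof -
  assume "Re c = 0"
  then have "sg = 0" unfolding sg_def disc by simp
  then show ?thesis unfolding t1_def t2_def using N_pos by simp
qed

lemma eig_root': "t \<noteq> 0 \<Longrightarrow> is_eigenvalue_l2 \<rho> (complex_of_real t) \<Longrightarrow> t = t1 \<or> t = t2"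
  using eig_root root_iff unfolding cc_def by blast

end
lemma comb_scale: "((a::complex) * A) / D * x + (a * B) / D * y = a * ((A / D) * x + (B / D) * y)"
  by (simp add: algebra_simps)

context rk2 begin

lemma zero_inner: "l2_inner x (\<lambda>_. 0) = 0" unfolding l2_inner_def by simp

lemma cd_cc: "c * cnj c = complex_of_real cc" unfolding cc_def by (rule cd_eq)

lemma one_cd_nz: "1 - c * cnj c \<noteq> 0"
proof -
  have "1 - c * cnj c = complex_of_real (1 - cc)" unfolding cd_cc by simp
  then show ?thesis using cc_lt1 by simp
qed

lemma s_nz: "Re c \<noteq> 0 \<Longrightarrow> c + cnj c \<noteq> 0"
  by (metis complex_add_cnj mult_eq_0_iff of_real_eq_0_iff zero_neq_numeral)

lemma root_complex:
  assumes "t = t1 \<or> t = t2"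
  shows "(complex_of_real N)\<^sup>2 * (complex_of_real t)\<^sup>2 - (complex_of_real N)\<^sup>2 * complex_of_real t
          + (1 - c * cnj c)\<^sup>2 = 0"
proof -
  have "N\<^sup>2 * t\<^sup>2 - N\<^sup>2 * t + (1 - cc)\<^sup>2 = 0" using root_iff assms by blast
  then have "complex_of_real (N\<^sup>2 * t\<^sup>2 - N\<^sup>2 * t + (1 - cc)\<^sup>2) = 0" by simp
  then show ?thesis unfolding cd_cc by simp
qed

lemma exist_eig:
  assumes a: "Re c \<noteq> 0" and t: "t = t1 \<or> t = t2"
  shows "\<exists>y. is_l2 y \<and> \<rho> y = (\<lambda>i. complex_of_real t * y i) \<and> y \<noteq> (\<lambda>_. 0)"
proof -
  define K where "K = complex_of_real N"
  define T where "T = complex_of_real t"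
  define d where "d = cnj c"
  define s where "s = c + d"
  define Y where "Y = K * T - 1 - d\<^sup>2"
  define y where "y = (\<lambda>k. s * p k + Y * q k)"
  have KE: "K = 2 + c\<^sup>2 + d\<^sup>2" unfolding K_def d_def by (rule N_eq)
  have K0: "K \<noteq> 0" unfolding K_def by (rule K_nz)
  have s0: "s \<noteq> 0" unfolding s_def d_def using s_nz[OF a] .
  have R: "K\<^sup>2 * T\<^sup>2 - K\<^sup>2 * T + (1 - c * d)\<^sup>2 = 0" unfolding K_def T_def d_def by (rule root_complex[OF t])
  have yl2: "is_l2 y" unfolding y_def using p_l2 q_l2 by (rule l2_lin)
  have al: "l2_inner p y = s + Y * c" and be: "l2_inner q y = s * d + Y"
    unfolding y_def inner_pq_comb d_def by simp_all
  have id1: "l2_inner p y + d * l2_inner q y = K * T * s"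
    unfolding al be Y_def s_def by (simp add: algebra_simps power2_eq_square)
  have XY: "(K * T - 1 - c\<^sup>2) * Y - s\<^sup>2 = K\<^sup>2 * T\<^sup>2 - K * T * (2 + c\<^sup>2 + d\<^sup>2) + (1 - c * d)\<^sup>2"
    unfolding Y_def s_def by algebra
  then have XY0: "(K * T - 1 - c\<^sup>2) * Y - s\<^sup>2 = 0" using R KE by (simp add: power2_eq_square mult_ac)
  have id2: "c * l2_inner p y + l2_inner q y = K * T * Y"
  proof -
    have "c * l2_inner p y + l2_inner q y = s\<^sup>2 + (1 + c\<^sup>2) * Y"
      unfolding al be s_def by (simp add: algebra_simps power2_eq_square)
    also have "\<dots> = K * T * Y" using XY0 by (simp add: algebra_simps power2_eq_square)
    finally show ?thesis .
  qed
  have ev: "\<rho> y = (\<lambda>i. T * y i)"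
  proof
    fix k
    have "\<rho> y k = ((K * T * s) / K) * p k + ((K * T * Y) / K) * q k"
      using rho[OF yl2] id1 id2 unfolding K_def d_def by simp
    also have "\<dots> = T * y k" unfolding y_def using K0 by (simp add: algebra_simps)
    finally show "\<rho> y k = T * y k" .
  qed
  have nz: "y \<noteq> (\<lambda>_. 0)"
  proof
    assume y0: "y = (\<lambda>_. 0)"
    have "l2_inner p y = 0" "l2_inner q y = 0" unfolding y0 by (rule zero_inner)+
    then have "s + Y * c = 0" "s * d + Y = 0" using al be by simp_all
    then have "Y = - (s * d)" by (simp add: eq_neg_iff_add_eq_0 add.commute)
    then have "s * (1 - c * d) = s + Y * c" by (simp add: algebra_simps)
    then have "s * (1 - c * d) = 0" using \<open>s + Y * c = 0\<close> by simp
    then show False using s0 one_cd_nz unfolding d_def by simp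
  qed
  show ?thesis using yl2 ev nz unfolding T_def by blast
qed

lemma eig_form:
  assumes t0: "t \<noteq> 0" and y: "is_l2 y" and ev: "\<rho> y = (\<lambda>i. complex_of_real t * y i)"
  shows "y k = ((l2_inner p y + cnj c * l2_inner q y) / (complex_of_real N * complex_of_real t)) * p k
             + ((c * l2_inner p y + l2_inner q y) / (complex_of_real N * complex_of_real t)) * q k"
proof -
  let ?K = "complex_of_real N"
  let ?A = "(l2_inner p y + cnj c * l2_inner q y) / ?K"
  let ?B = "(c * l2_inner p y + l2_inner q y) / ?K"
  have h: "complex_of_real t * y k = ?A * p k + ?B * q k"
    using fun_cong[OF ev, of k] rho[OF y] by simp
  have "y k = (complex_of_real t * y k) / complex_of_real t" using t0 by simp
  also have "\<dots> = (?A * p k + ?B * q k) / complex_of_real t" by (simp only: h)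
  also have "\<dots> = (?A / complex_of_real t) * p k + (?B / complex_of_real t) * q k"
    by (rule comb_div)
  finally show ?thesis by simp
qed

lemma uniq_eig:
  assumes a: "Re c \<noteq> 0" and t0: "t \<noteq> 0"
  shows "\<exists>g. \<forall>y \<in> eigenspace_l2 \<rho> (complex_of_real t). \<exists>a. y = (\<lambda>i. a * g i)"
proof -
  define K where "K = complex_of_real N"
  define T where "T = complex_of_real t"
  define d where "d = cnj c"
  define s where "s = c + d"
  define X where "X = K * T - 1 - c\<^sup>2"
  define g where "g = (\<lambda>k. ((1 + d * X / s) / (K * T)) * p k + ((c + X / s) / (K * T)) * q k)"
  have K0: "K \<noteq> 0" unfolding K_def by (rule K_nz)
  have T0: "T \<noteq> 0" unfolding T_def using t0 by simp
  have s0: "s \<noteq> 0" unfolding s_def d_def using s_nz[OF a] .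
  show ?thesis
  proof (rule exI[of _ g], intro ballI)
    fix y assume "y \<in> eigenspace_l2 \<rho> (complex_of_real t)"
    then have y: "is_l2 y" and ev: "\<rho> y = (\<lambda>i. complex_of_real t * y i)"
      unfolding eigenspace_l2_def by auto
    define \<alpha> where "\<alpha> = l2_inner p y"
    define \<beta> where "\<beta> = l2_inner q y"
    have e1: "K * (T * \<alpha>) = (\<alpha> + d * \<beta>) + (c * \<alpha> + \<beta>) * c"
      using rho_eqs(1)[OF y ev] unfolding K_def T_def d_def \<alpha>_def \<beta>_def .
    have "X * \<alpha> = s * \<beta>" using e1 unfolding X_def s_def by (simp add: algebra_simps power2_eq_square)
    then have be: "\<beta> = X * \<alpha> / s" using s0 by (simp add: field_simps)
    have "y = (\<lambda>i. \<alpha> * g i)"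
    proof
      fix k
      have "y k = ((\<alpha> + d * \<beta>) / (K * T)) * p k + ((c * \<alpha> + \<beta>) / (K * T)) * q k"
        using eig_form[OF t0 y ev, of k] unfolding K_def T_def d_def \<alpha>_def \<beta>_def .
      also have "\<dots> = \<alpha> * g k"
      proof -
        have c1: "\<alpha> + d * \<beta> = \<alpha> * (1 + d * X / s)" unfolding be by (simp add: algebra_simps)
        have c2: "c * \<alpha> + \<beta> = \<alpha> * (c + X / s)" unfolding be by (simp add: algebra_simps)
        show ?thesis unfolding c1 c2 g_def by (rule comb_scale)
      qed
      finally show "y k = \<alpha> * g k" .
    qed
    then show "\<exists>a. y = (\<lambda>i. a * g i)" by blast
  qed
qed

lemma unit_eig:
  assumes y: "is_l2 y" and ev: "\<rho> y = (\<lambda>i. T * y i)" and nz: "y \<noteq> (\<lambda>_. 0)"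
  shows "\<exists>e. {e} \<subseteq> eigenspace_l2 \<rho> T \<and> orthonormal_l2 {e}"
proof -
  define n where "n = l2_norm y"
  have n0: "n > 0" unfolding n_def using norm_pos[OF y nz] .
  define e where "e = (\<lambda>i. complex_of_real (1 / n) * y i)"
  have el2: "is_l2 e" unfolding e_def using l2_scale[OF y] .
  have "\<rho> e = (\<lambda>i. T * e i)" unfolding e_def rho_scale[OF y] ev by (simp add: mult_ac)
  moreover have "l2_inner e e = 1"
    unfolding e_def inner_scale_left inner_scale_right inner_self[OF y] n_def[symmetric]
    using n0 by (simp add: power2_eq_square)
  ultimately show ?thesis using el2 unfolding eigenspace_l2_def orthonormal_l2_def by auto
qed

end
context rk2 begin

lemma half:
  assumes a: "Re c = 0"
  shows "\<rho> (\<lambda>k. x1 * p k + x2 * q k) = (\<lambda>k. complex_of_real (1/2) * (x1 * p k + x2 * q k))"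
proof -
  define K where "K = complex_of_real N"
  define d where "d = cnj c"
  have dc: "d = - c" unfolding d_def using a by (simp add: complex_eq_iff)
  have KE: "K = 2 * (1 + c\<^sup>2)" unfolding K_def using N_eq dc unfolding d_def by (simp add: power2_eq_square)
  have K0: "K \<noteq> 0" unfolding K_def by (rule K_nz)
  have c0: "1 + c\<^sup>2 \<noteq> 0"
  proof
    assume "1 + c\<^sup>2 = 0"
    then have "K = 0" unfolding KE by simp
    with K0 show False by simp
  qed
  have yl2: "is_l2 (\<lambda>k. x1 * p k + x2 * q k)" using p_l2 q_l2 by (rule l2_lin)
  have i1: "l2_inner p (\<lambda>k. x1 * p k + x2 * q k) + d * l2_inner q (\<lambda>k. x1 * p k + x2 * q k) = x1 * (1 + c\<^sup>2)"
    unfolding inner_pq_comb d_def[symmetric] dc by (simp add: algebra_simps power2_eq_square)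
  have i2: "c * l2_inner p (\<lambda>k. x1 * p k + x2 * q k) + l2_inner q (\<lambda>k. x1 * p k + x2 * q k) = x2 * (1 + c\<^sup>2)"
    unfolding inner_pq_comb d_def[symmetric] dc by (simp add: algebra_simps power2_eq_square)
  show ?thesis
  proof
    fix k
    have "\<rho> (\<lambda>k. x1 * p k + x2 * q k) k = (x1 * (1 + c\<^sup>2) / K) * p k + (x2 * (1 + c\<^sup>2) / K) * q k"
      using rho[OF yl2] i1 i2 unfolding K_def d_def by simp
    also have "\<dots> = complex_of_real (1/2) * (x1 * p k + x2 * q k)"
    proof -
      have h: "x * (1 + c\<^sup>2) / K = x / 2" for x
        unfolding KE by (rule nonzero_mult_divide_mult_cancel_right[OF c0])
      show ?thesis unfolding h by (simp add: algebra_simps)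
    qed
    finally show "\<rho> (\<lambda>k. x1 * p k + x2 * q k) k = complex_of_real (1/2) * (x1 * p k + x2 * q k)" .
  qed
qed

lemma p_nz: "p \<noteq> (\<lambda>_. 0)"
proof
  assume "p = (\<lambda>_. 0)"
  then have "l2_inner p p = 0" using zero_inner by simp
  then show False using pp by simp
qed

lemma set_a0:
  assumes a: "Re c = 0"
  shows "{t::real. t \<noteq> 0 \<and> is_eigenvalue_l2 \<rho> (complex_of_real t)} = {1/2}"
proof -
  have "is_eigenvalue_l2 \<rho> (complex_of_real (1/2))"
  proof -
    have "p = (\<lambda>k. 1 * p k + 0 * q k)" by simp
    then have "\<rho> p = (\<lambda>k. complex_of_real (1/2) * p k)" using half[OF a, of 1 0] by simp
    then show ?thesis unfolding is_eigenvalue_l2_def eigenspace_l2_def using p_l2 p_nz by blast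
  qed
  moreover have "t = 1/2" if "t \<noteq> 0" "is_eigenvalue_l2 \<rho> (complex_of_real t)" for t
    using eig_root'[OF that] t12_half[OF a] by auto
  ultimately show ?thesis by auto
qed

lemma mult_a0:
  assumes a: "Re c = 0"
  shows "eig_mult \<rho> (complex_of_real (1/2)) = 2"
proof (rule eig_mult_eq)
  fix S assume S: "finite S" "S \<subseteq> eigenspace_l2 \<rho> (complex_of_real (1/2))" "orthonormal_l2 S"
  show "card S \<le> 2"
  proof (rule card_le2[OF p_l2 q_l2 S(1) S(3)])
    fix y assume "y \<in> S"
    then have "is_l2 y" "\<rho> y = (\<lambda>i. complex_of_real (1/2) * y i)"
      using S(2) unfolding eigenspace_l2_def by auto
    then show "\<exists>a b. y = (\<lambda>i. a * p i + b * q i)" using eig_span[of "1/2" y] by simp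
  qed
next
  define r where "r = sqrt (1 - cc)"
  have r0: "r > 0" unfolding r_def using cc_lt1 by simp
  define e where "e = (\<lambda>k. (- c / complex_of_real r) * p k + (1 / complex_of_real r) * q k)"
  have pe: "p = (\<lambda>k. 1 * p k + 0 * q k)" by simp
  have el2: "is_l2 e" unfolding e_def using p_l2 q_l2 by (rule l2_lin)
  have inpe: "l2_inner p e = 0" unfolding e_def inner_pq_comb by (simp add: field_simps)
  have inep: "l2_inner e p = 0" using inner_cnj[of e p] inpe by simp
  have inee: "l2_inner e e = 1"
  proof -
    have "l2_inner e e = cnj (- c / complex_of_real r) * l2_inner p e + cnj (1 / complex_of_real r) * l2_inner q e"
    proof -
      have eq: "(\<lambda>k. (- c / complex_of_real r) * p k + (1 / complex_of_real r) * q k) = e" by (simp add: e_def)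
      show ?thesis using inner_lin_left[OF el2 p_l2 q_l2, of "- c / complex_of_real r" "1 / complex_of_real r"]
        unfolding eq .
    qed
    also have "\<dots> = (1 - c * cnj c) / (complex_of_real r)\<^sup>2"
      unfolding inpe unfolding e_def inner_pq_comb using r0 by (simp add: field_simps power2_eq_square)
    also have "\<dots> = 1" unfolding cd_cc r_def using cc_lt1
      by (simp flip: of_real_power add: of_real_diff[symmetric])
    finally show ?thesis .
  qed
  have pne: "p \<noteq> e" using inpe pp by auto
  show "finite {p, e}" by simp
  show "card {p, e} = 2" using pne by simp
  show "orthonormal_l2 {p, e}" unfolding orthonormal_l2_def using pp inee inpe inep pne by auto
  show "{p, e} \<subseteq> eigenspace_l2 \<rho> (complex_of_real (1/2))"
  proof -
    have "\<rho> p = (\<lambda>k. complex_of_real (1/2) * p k)" using half[OF a, of 1 0] pe by simp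
    moreover have "\<rho> e = (\<lambda>k. complex_of_real (1/2) * e k)" unfolding e_def by (rule half[OF a])
    ultimately show ?thesis unfolding eigenspace_l2_def using p_l2 el2 by auto
  qed
qed

end
lemma flog: "(t::real) > 0 \<Longrightarrow> - (t * ln t) \<ge> t * (1 - t)"
proof -
  assume t: "t > 0"
  have "ln t \<le> t - 1" using ln_le_minus_one[OF t] .
  then have "t * ln t \<le> t * (t - 1)" using t by (simp add: mult_left_mono)
  then show ?thesis by (simp add: algebra_simps)
qed

context rk2 begin

lemma t12_nz: "t1 \<noteq> 0" "t2 \<noteq> 0" using t1_pos t2_pos by auto

lemma set_a1:
  assumes a: "Re c \<noteq> 0"
  shows "{t::real. t \<noteq> 0 \<and> is_eigenvalue_l2 \<rho> (complex_of_real t)} = {t1, t2}"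
proof -
  have "is_eigenvalue_l2 \<rho> (complex_of_real t)" if "t = t1 \<or> t = t2" for t
    using exist_eig[OF a that] unfolding is_eigenvalue_l2_def eigenspace_l2_def by blast
  then show ?thesis using eig_root' t12_nz by auto
qed

lemma mult_a1:
  assumes a: "Re c \<noteq> 0" and t: "t = t1 \<or> t = t2"
  shows "eig_mult \<rho> (complex_of_real t) = 1"
proof -
  have t0: "t \<noteq> 0" using t t12_nz by auto
  obtain g where g: "\<forall>y \<in> eigenspace_l2 \<rho> (complex_of_real t). \<exists>a. y = (\<lambda>i. a * g i)"
    using uniq_eig[OF a t0] by blast
  obtain y where y: "is_l2 y" "\<rho> y = (\<lambda>i. complex_of_real t * y i)" "y \<noteq> (\<lambda>_. 0)"
    using exist_eig[OF a t] by blast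
  obtain e where e: "{e} \<subseteq> eigenspace_l2 \<rho> (complex_of_real t)" "orthonormal_l2 {e}"
    using unit_eig[OF y] by blast
  show ?thesis
  proof (rule eig_mult_eq[OF _ _ e(1) e(2)])
    fix S assume S: "finite S" "S \<subseteq> eigenspace_l2 \<rho> (complex_of_real t)" "orthonormal_l2 S"
    show "card S \<le> 1" using card_le1[OF S(1) S(3), of g] g S(2) by blast
  qed auto
qed

theorem entropy_bound:
  "(\<Sum>\<^sub>\<infinity>t\<in>{t::real. t \<noteq> 0 \<and> is_eigenvalue_l2 \<rho> (complex_of_real t)}.
          - (real (eig_mult \<rho> (complex_of_real t)) * (t * ln t))) \<ge> 2 * (1 - cc)\<^sup>2 / N\<^sup>2"
proof (cases "Re c = 0")
  case True
  have h: "t1 = 1/2" "t2 = 1/2" using t12_half[OF True] by auto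
  have "(1 - cc)\<^sup>2 / N\<^sup>2 = t1 * t2" using t_prod by simp
  also have "\<dots> = 1/4" unfolding h by simp
  finally have q: "(1 - cc)\<^sup>2 / N\<^sup>2 = 1/4" .
  have "2 * (1 - cc)\<^sup>2 / N\<^sup>2 = 2 * ((1 - cc)\<^sup>2 / N\<^sup>2)" by (rule times_divide_eq_right[symmetric])
  also have "\<dots> = 1/2" unfolding q by simp
  finally have r: "2 * (1 - cc)\<^sup>2 / N\<^sup>2 = 1/2" .
  have "(1/2::real) * (1 - 1/2) \<le> - (1/2 * ln (1/2))" by (rule flog) simp
  then show ?thesis unfolding set_a0[OF True] using mult_a0[OF True] r by simp
next
  case False
  have m: "eig_mult \<rho> (complex_of_real t1) = 1" "eig_mult \<rho> (complex_of_real t2) = 1"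
    using mult_a1[OF False] by auto
  have t2e: "t2 = 1 - t1" using t_sum by simp
  have "t1 * (1 - t1) + t2 * (1 - t2) = 2 * (t1 * t2)" unfolding t2e by (simp add: algebra_simps)
  also have "\<dots> = 2 * (1 - cc)\<^sup>2 / N\<^sup>2" unfolding t_prod by simp
  finally have e: "t1 * (1 - t1) + t2 * (1 - t2) = 2 * (1 - cc)\<^sup>2 / N\<^sup>2" .
  have "t1 * (1 - t1) \<le> - (t1 * ln t1)" "t2 * (1 - t2) \<le> - (t2 * ln t2)"
    using flog t1_pos t2_pos by auto
  then show ?thesis unfolding set_a1[OF False] using m t12_ne[OF False] e by simp
qed

end
lemma comb_inv: "(1 / (K::complex)) * (X * a + Y * b) = (X / K) * a + (Y / K) * b"
  by (simp add: divide_inverse algebra_simps)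

theorem theorem3:
  fixes u v :: "'i::countable \<Rightarrow> complex"
    and w b :: "'i \<times> 'i \<Rightarrow> complex"
  assumes "is_l2 u" and "is_l2 v"
    and "u \<noteq> (\<lambda>_. 0)" and "v \<noteq> (\<lambda>_. 0)"
    and "\<forall>c::complex. u \<noteq> (\<lambda>i. c * v i)"
    and w_def: "w = (\<lambda>p. complex_of_real (1 / (l2_norm u)\<^sup>2) * tensor u u p
                    + complex_of_real (1 / (l2_norm v)\<^sup>2) * tensor v v p)"
    and b_def: "b = (\<lambda>p. complex_of_real (1 / l2_norm w) * w p)"
  shows "ent_entropy b \<ge>
           2 * ((l2_norm u)\<^sup>2 * (l2_norm v)\<^sup>2 - (cmod (l2_inner u v))\<^sup>2)\<^sup>2
           / (Re (complex_of_real (2 * (l2_norm u)\<^sup>2 * (l2_norm v)\<^sup>2)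
                   + (l2_inner u v)\<^sup>2 + (l2_inner v u)\<^sup>2))\<^sup>2"
proof -
  note ul2 = assms(1) and vl2 = assms(2)
  define nu where "nu = l2_norm u"
  define nv where "nv = l2_norm v"
  have nu0: "nu > 0" unfolding nu_def by (rule norm_pos[OF assms(1,3)])
  have nv0: "nv > 0" unfolding nv_def by (rule norm_pos[OF assms(2,4)])
  define p where "p = (\<lambda>i. complex_of_real (1 / nu) * u i)"
  define q where "q = (\<lambda>i. complex_of_real (1 / nv) * v i)"
  have pl2: "is_l2 p" unfolding p_def by (rule l2_scale[OF ul2])
  have ql2: "is_l2 q" unfolding q_def by (rule l2_scale[OF vl2])
  have pp: "l2_inner p p = 1"
    unfolding p_def inner_scale_left inner_scale_right inner_self[OF ul2] nu_def[symmetric]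
    using nu0 by (simp add: power2_eq_square)
  have qq: "l2_inner q q = 1"
    unfolding q_def inner_scale_left inner_scale_right inner_self[OF vl2] nv_def[symmetric]
    using nv0 by (simp add: power2_eq_square)
  define c where "c = l2_inner p q"
  have qp: "l2_inner q p = cnj c" unfolding c_def by (rule inner_cnj)
  have up: "u = (\<lambda>i. complex_of_real nu * p i)" unfolding p_def using nu0 by auto
  have vq: "v = (\<lambda>i. complex_of_real nv * q i)" unfolding q_def using nv0 by auto
  have uv: "l2_inner u v = complex_of_real (nu * nv) * c"
    unfolding c_def by (subst up, subst vq) (simp add: inner_scale_left inner_scale_right)
  have vu: "l2_inner v u = complex_of_real (nu * nv) * cnj c"
    unfolding qp[symmetric] by (subst up, subst vq) (simp add: inner_scale_left inner_scale_right)
  have ccd: "c * cnj c = complex_of_real ((cmod c)\<^sup>2)" by (rule complex_norm_square[symmetric])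
  have c_lt: "cmod c < 1"
  proof -
    define z where "z = (\<lambda>i. 1 * p i + (- cnj c) * q i)"
    have zl2: "is_l2 z" unfolding z_def using pl2 ql2 by (rule l2_lin)
    have pz: "l2_inner p z = 1 - cnj c * c"
      unfolding z_def inner_lin_right[OF pl2 pl2 ql2] pp c_def[symmetric] by simp
    have qz: "l2_inner q z = 0"
      unfolding z_def inner_lin_right[OF ql2 pl2 ql2] qq qp by simp
    have zz: "l2_inner z z = 1 - c * cnj c"
    proof -
      have "l2_inner z z = cnj 1 * l2_inner p z + cnj (- cnj c) * l2_inner q z"
        using inner_lin_left[OF zl2 pl2 ql2, of 1 "- cnj c"] unfolding z_def .
      then show ?thesis using pz qz by (simp add: mult.commute)
    qed
    have znz: "z \<noteq> (\<lambda>_. 0)"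
    proof
      assume "z = (\<lambda>_. 0)"
      then have "\<And>i. p i = cnj c * q i" unfolding z_def by (metis add_eq_0_iff2 mult_1 mult_minus_left minus_minus)
      then have "u = (\<lambda>i. (complex_of_real nu * cnj c / complex_of_real nv) * v i)"
        unfolding up vq using nv0 by auto
      then show False using assms(5) by blast
    qed
    have "l2_norm z > 0" by (rule norm_pos[OF zl2 znz])
    then have "complex_of_real ((l2_norm z)\<^sup>2) = complex_of_real (1 - (cmod c)\<^sup>2)"
      using zz inner_self[OF zl2] ccd by simp
    then have "(l2_norm z)\<^sup>2 = 1 - (cmod c)\<^sup>2" by (simp only: of_real_eq_iff)
    moreover have "(l2_norm z)\<^sup>2 > 0" using \<open>l2_norm z > 0\<close> by simp
    ultimately have "(cmod c)\<^sup>2 < 1" by simp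
    then show ?thesis by (simp add: abs_square_less_1)
  qed
  have wpq: "w = (\<lambda>x. 1 * tensor p p x + 1 * tensor q q x)"
    unfolding w_def p_def q_def nu_def nv_def tensor_def
    by (auto simp: power2_eq_square)
  have tl2: "is_l2 (tensor p p)" "is_l2 (tensor q q)" using l2_tensor pl2 ql2 by auto
  have wl2: "is_l2 w" unfolding wpq using tl2 by (rule l2_lin)
  define N where "N = (l2_norm w)\<^sup>2"
  have N_eq: "complex_of_real N = 2 + c\<^sup>2 + (cnj c)\<^sup>2"
  proof -
    have t1: "l2_inner (tensor p p) w = 1 + c\<^sup>2"
      unfolding wpq inner_lin_right[OF tl2(1) tl2] inner_tensor[OF pl2 pl2 pl2 pl2] inner_tensor[OF pl2 pl2 ql2 ql2]
      using pp c_def by (simp add: power2_eq_square)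
    have t2: "l2_inner (tensor q q) w = (cnj c)\<^sup>2 + 1"
      unfolding wpq inner_lin_right[OF tl2(2) tl2] inner_tensor[OF ql2 ql2 pl2 pl2] inner_tensor[OF ql2 ql2 ql2 ql2]
      using qq qp by (simp add: power2_eq_square)
    have "l2_inner w w = cnj 1 * l2_inner (tensor p p) w + cnj 1 * l2_inner (tensor q q) w"
      using inner_lin_left[OF wl2 tl2, of 1 1] unfolding wpq[symmetric] .
    then have "l2_inner w w = 2 + c\<^sup>2 + (cnj c)\<^sup>2" using t1 t2 by simp
    then show ?thesis using inner_self[OF wl2] unfolding N_def by simp
  qed
  define r where "r = 1 / l2_norm w"
  have bform: "b = (\<lambda>x. complex_of_real r * (tensor p p x + tensor q q x))"
    unfolding b_def r_def using wpq by simp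
  have r2: "complex_of_real (r\<^sup>2) = 1 / complex_of_real N"
    unfolding r_def N_def by (simp add: power_divide)
  have rho: "ptrace2 (proj1 b) y = (\<lambda>k. ((l2_inner p y + cnj c * l2_inner q y) / complex_of_real N) * p k
                                   + ((c * l2_inner p y + l2_inner q y) / complex_of_real N) * q k)"
    if y: "is_l2 y" for y
  proof
    fix k
    show "ptrace2 (proj1 b) y k = ((l2_inner p y + cnj c * l2_inner q y) / complex_of_real N) * p k
                                   + ((c * l2_inner p y + l2_inner q y) / complex_of_real N) * q k"
      unfolding rho_formula[OF pl2 ql2 pp qq y bform] r2 qp c_def[symmetric] by (rule comb_inv)
  qed
  interpret R: rk2 p q c N "ptrace2 (proj1 b)"
    by unfold_locales (use pl2 ql2 pp qq c_def c_lt N_eq rho in auto)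
  have main: "ent_entropy b \<ge> 2 * (1 - R.cc)\<^sup>2 / N\<^sup>2"
    unfolding ent_entropy_def Let_def by (rule R.entropy_bound)
  define M where "M = nu\<^sup>2 * nv\<^sup>2"
  have M0: "M > 0" unfolding M_def using nu0 nv0 by simp
  have num: "(l2_norm u)\<^sup>2 * (l2_norm v)\<^sup>2 - (cmod (l2_inner u v))\<^sup>2 = M * (1 - R.cc)"
    unfolding nu_def[symmetric] nv_def[symmetric] uv R.cc_def M_def
    using nu0 nv0 by (simp add: norm_mult cmod_power2 power_mult_distrib algebra_simps)
  have den: "Re (complex_of_real (2 * (l2_norm u)\<^sup>2 * (l2_norm v)\<^sup>2) + (l2_inner u v)\<^sup>2 + (l2_inner v u)\<^sup>2) = M * N"
  proof -
    have "complex_of_real (2 * (l2_norm u)\<^sup>2 * (l2_norm v)\<^sup>2) + (l2_inner u v)\<^sup>2 + (l2_inner v u)\<^sup>2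
        = complex_of_real M * (2 + c\<^sup>2 + (cnj c)\<^sup>2)"
      unfolding uv vu nu_def[symmetric] nv_def[symmetric] M_def by (simp add: power_mult_distrib algebra_simps)
    also have "\<dots> = complex_of_real (M * N)" unfolding N_eq[symmetric] by simp
    finally show ?thesis by simp
  qed
  have "2 * ((l2_norm u)\<^sup>2 * (l2_norm v)\<^sup>2 - (cmod (l2_inner u v))\<^sup>2)\<^sup>2
           / (Re (complex_of_real (2 * (l2_norm u)\<^sup>2 * (l2_norm v)\<^sup>2)
                   + (l2_inner u v)\<^sup>2 + (l2_inner v u)\<^sup>2))\<^sup>2 = 2 * (1 - R.cc)\<^sup>2 / N\<^sup>2"
    unfolding num den using M0 by (simp add: power_mult_distrib)
  then show ?thesis using main by simp
qed

end
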